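(* Let $G=(V,E,w)$ be a graph with $V\ne\emptyset$, positive integer vertex weights and maximum degree $\Delta\ge1$. Let $1\le\alpha\le\Delta$ and $\gamma=\lceil\sqrt{2\Delta\alpha}\,\rceil$, assume $\gamma\le\Delta$, and suppose $G$ is a $\gamma$-stable instance of \texttt{MIS} with maximum weight independent set $I^*$. Let $I$ be an independent set with $w(I)\ge w(I^* )/\alpha$, and let $S=\texttt{PURIFY}(G,I,\gamma)$. If $I\ne I^*$, then (1) $S\ne\emptyset$ and (2) $S\subseteq I^*$.
   Context: \texttt{MIS}: given a graph $G=(V,E)$ with weights $w:V\to\mathbb{R}_{>0}$, find an independent set maximizing $w(I)=\sum_{u\in I}w_u$; $w(X)=\sum_{u\in X}w_u$. For $\gamma\ge1$, a $\gamma$-perturbation of $w$ is any $w'$ with $w_u\le w'_u\le\gamma w_u$ for all $u$. The instance is $\gamma$-stable if it has a unique maximum weight independent set $I^*$ and $I^*$ remains the unique maximum weight independent set under every $\gamma$-perturbation of $w$. The procedure $\texttt{PURIFY}(G,I,\gamma)$ (for integer weights, integer $\gamma\ge1$ and independent set $I$): build an unweighted bipartite graph $G_0=(L\cup R,E_0)$ where $L$ contains $\gamma\cdot w(u)$ copies of each $u\in I$ and $R$ contains $w(v)$ copies of each $v\in V\setminus I$; for every edge $(u,v)\in E$ with $u\in I$, $v\notin I$, join every copy of $u$ in $L$ to every copy of $v$ in $R$. Compute a maximum cardinality matching $M$ of $G_0$ and return the set of all $u\in I$ having at least one copy in $L$ unmatched by $M$. *)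

theory Defs
  imports Complex_Main
begin

definition graph :: "'a set \<Rightarrow> ('a \<Rightarrow> 'a \<Rightarrow> bool) \<Rightarrow> bool" where
  "graph V E \<longleftrightarrow> finite V \<and> (\<forall>u v. E u v \<longrightarrow> u \<in> V \<and> v \<in> V)
     \<and> (\<forall>u v. E u v \<longrightarrow> E v u) \<and> (\<forall>u. \<not> E u u)"

definition degree :: "'a set \<Rightarrow> ('a \<Rightarrow> 'a \<Rightarrow> bool) \<Rightarrow> 'a \<Rightarrow> nat" where
  "degree V E v = card {u \<in> V. E v u}"

definition max_degree :: "'a set \<Rightarrow> ('a \<Rightarrow> 'a \<Rightarrow> bool) \<Rightarrow> nat" where
  "max_degree V E = Max (degree V E ` V)"

definition indep :: "'a set \<Rightarrow> ('a \<Rightarrow> 'a \<Rightarrow> bool) \<Rightarrow> 'a set \<Rightarrow> bool" where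
  "indep V E I \<longleftrightarrow> I \<subseteq> V \<and> (\<forall>u\<in>I. \<forall>v\<in>I. \<not> E u v)"

definition wsum :: "('a \<Rightarrow> real) \<Rightarrow> 'a set \<Rightarrow> real" where
  "wsum w X = (\<Sum>u\<in>X. w u)"

definition unique_mwis :: "'a set \<Rightarrow> ('a \<Rightarrow> 'a \<Rightarrow> bool) \<Rightarrow> ('a \<Rightarrow> real) \<Rightarrow> 'a set \<Rightarrow> bool" where
  "unique_mwis V E w I \<longleftrightarrow> indep V E I \<and>
     (\<forall>J. indep V E J \<and> J \<noteq> I \<longrightarrow> wsum w J < wsum w I)"

definition perturbation :: "'a set \<Rightarrow> real \<Rightarrow> ('a \<Rightarrow> real) \<Rightarrow> ('a \<Rightarrow> real) \<Rightarrow> bool" where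
  "perturbation V \<gamma> w w' \<longleftrightarrow> (\<forall>u\<in>V. w u \<le> w' u \<and> w' u \<le> \<gamma> * w u)"

definition stable_instance :: "'a set \<Rightarrow> ('a \<Rightarrow> 'a \<Rightarrow> bool) \<Rightarrow> ('a \<Rightarrow> real) \<Rightarrow> real \<Rightarrow> 'a set \<Rightarrow> bool" where
  "stable_instance V E w \<gamma> Istar \<longleftrightarrow> unique_mwis V E w Istar \<and>
     (\<forall>w'. perturbation V \<gamma> w w' \<longrightarrow> unique_mwis V E w' Istar)"

text \<open>The bipartite graph G0 of PURIFY: copies (u,i).\<close>
definition copiesL :: "'a set \<Rightarrow> nat \<Rightarrow> ('a \<Rightarrow> nat) \<Rightarrow> ('a \<times> nat) set" where
  "copiesL I \<gamma> w = {(u, i). u \<in> I \<and> i < \<gamma> * w u}"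

definition copiesR :: "'a set \<Rightarrow> 'a set \<Rightarrow> ('a \<Rightarrow> nat) \<Rightarrow> ('a \<times> nat) set" where
  "copiesR V I w = {(v, j). v \<in> V - I \<and> j < w v}"

definition G0_matching :: "'a set \<Rightarrow> ('a \<Rightarrow> 'a \<Rightarrow> bool) \<Rightarrow> ('a \<Rightarrow> nat) \<Rightarrow> 'a set \<Rightarrow> nat
    \<Rightarrow> (('a \<times> nat) \<times> ('a \<times> nat)) set \<Rightarrow> bool" where
  "G0_matching V E w I \<gamma> M \<longleftrightarrow> M \<subseteq> copiesL I \<gamma> w \<times> copiesR V I w
     \<and> (\<forall>(x, y)\<in>M. E (fst x) (fst y))
     \<and> (\<forall>(x, y)\<in>M. \<forall>(x', y')\<in>M. x = x' \<longleftrightarrow> y = y')"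

definition G0_max_matching :: "'a set \<Rightarrow> ('a \<Rightarrow> 'a \<Rightarrow> bool) \<Rightarrow> ('a \<Rightarrow> nat) \<Rightarrow> 'a set \<Rightarrow> nat
    \<Rightarrow> (('a \<times> nat) \<times> ('a \<times> nat)) set \<Rightarrow> bool" where
  "G0_max_matching V E w I \<gamma> M \<longleftrightarrow> G0_matching V E w I \<gamma> M
     \<and> (\<forall>M'. G0_matching V E w I \<gamma> M' \<longrightarrow> card M' \<le> card M)"

definition purify_out :: "'a set \<Rightarrow> nat \<Rightarrow> ('a \<Rightarrow> nat) \<Rightarrow> (('a \<times> nat) \<times> ('a \<times> nat)) set \<Rightarrow> 'a set" where
  "purify_out I \<gamma> w M = {u \<in> I. \<exists>i < \<gamma> * w u. (u, i) \<notin> fst ` M}"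

end

theory Submission
  imports Defs
begin

lemma card_copies:
  assumes "finite A"
  fixes f :: "'a \<Rightarrow> nat"
  shows "card {(u, i). u \<in> A \<and> i < f u} = (\<Sum>u\<in>A. f u)"
proof -
  have "{(u, i). u \<in> A \<and> i < f u} = Sigma A (\<lambda>u. {..<f u})" by auto
  thus ?thesis using assms by (simp add: card_SigmaI)
qed

lemma stab:
  assumes st: "stable_instance V E (\<lambda>u. real (w u)) g Is" and J: "indep V E J" and ne: "J \<noteq> Is"
    and g: "g \<ge> 1" and fin: "finite V"
  shows "g * (\<Sum>u\<in>J-Is. real (w u)) < (\<Sum>u\<in>Is-J. real (w u))"
proof -
  define w' where "w' = (\<lambda>u. if u \<in> J - Is then g * real (w u) else real (w u))"
  have "perturbation V g (\<lambda>u. real (w u)) w'"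
    unfolding perturbation_def w'_def using g
    by (auto intro: mult_right_mono[of 1 g, simplified])
  hence um: "unique_mwis V E w' Is" using st unfolding stable_instance_def by blast
  hence lt: "wsum w' J < wsum w' Is" using J ne unfolding unique_mwis_def by blast
  have finJ: "finite J" using J fin unfolding indep_def by (meson finite_subset)
  have finI: "finite Is" using um fin unfolding unique_mwis_def indep_def by (meson finite_subset)
  have "wsum w' J = (\<Sum>u\<in>J \<inter> Is. w' u) + (\<Sum>u\<in>J - Is. w' u)"
    unfolding wsum_def using sum.Int_Diff[OF finJ] by blast
  also have "\<dots> = (\<Sum>u\<in>J \<inter> Is. real (w u)) + g * (\<Sum>u\<in>J - Is. real (w u))"
    unfolding w'_def by (simp add: sum_distrib_left)
  finally have a: "wsum w' J = (\<Sum>u\<in>J \<inter> Is. real (w u)) + g * (\<Sum>u\<in>J - Is. real (w u))" .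
  have "wsum w' Is = (\<Sum>u\<in>Is \<inter> J. w' u) + (\<Sum>u\<in>Is - J. w' u)"
    unfolding wsum_def using sum.Int_Diff[OF finI] by blast
  also have "\<dots> = (\<Sum>u\<in>J \<inter> Is. real (w u)) + (\<Sum>u\<in>Is - J. real (w u))"
    unfolding w'_def by (simp add: Int_commute)
  finally have b: "wsum w' Is = (\<Sum>u\<in>J \<inter> Is. real (w u)) + (\<Sum>u\<in>Is - J. real (w u))" .
  show ?thesis using lt a b by linarith
qed

lemma hall:
  fixes A :: "'a set" and N :: "'a \<Rightarrow> 'b set"
  assumes "finite A" "\<forall>a\<in>A. finite (N a)" "\<forall>Z\<subseteq>A. card Z \<le> card (\<Union>(N ` Z))"
  shows "\<exists>f. inj_on f A \<and> (\<forall>a\<in>A. f a \<in> N a)"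
  using assms
proof (induction "card A" arbitrary: A N rule: less_induct)
  case less
  show ?case
  proof (cases "A = {}")
    case True thus ?thesis by auto
  next
    case ne: False
    show ?thesis
    proof (cases "\<exists>Z. Z \<subseteq> A \<and> Z \<noteq> {} \<and> Z \<noteq> A \<and> card (\<Union>(N ` Z)) = card Z")
      case False
      obtain a where a: "a \<in> A" using ne by auto
      have "card {a} \<le> card (\<Union>(N ` {a}))" using less.prems(3) a by blast
      hence "card (N a) \<ge> 1" by simp
      then obtain b where b: "b \<in> N a" by fastforce
      define A' where "A' = A - {a}"
      define N' where "N' = (\<lambda>x. N x - {b})"
      have cA': "card A' < card A" unfolding A'_def using a less.prems(1) by (rule card_Diff1_less[rotated])
      have "\<exists>f. inj_on f A' \<and> (\<forall>x\<in>A'. f x \<in> N' x)"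
      proof (rule less.hyps[OF cA'])
        show "finite A'" using less.prems(1) A'_def by auto
        show "\<forall>x\<in>A'. finite (N' x)" using less.prems(2) A'_def N'_def by auto
        show "\<forall>Z\<subseteq>A'. card Z \<le> card (\<Union>(N' ` Z))"
        proof (intro allI impI)
          fix Z assume Z: "Z \<subseteq> A'"
          show "card Z \<le> card (\<Union>(N' ` Z))"
          proof (cases "Z = {}")
            case True thus ?thesis by simp
          next
            case Zne: False
            have ZA: "Z \<subseteq> A" "Z \<noteq> A" using Z a A'_def by auto
            have fin: "finite (\<Union>(N ` Z))" using ZA less.prems(1,2)
              by (meson finite_UN_I finite_subset subsetD)
            have "card Z \<le> card (\<Union>(N ` Z))" using less.prems(3) ZA by blast
            moreover have "card (\<Union>(N ` Z)) \<noteq> card Z" using False ZA Zne by blast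
            ultimately have "card (\<Union>(N ` Z)) \<ge> card Z + 1" by linarith
            moreover have "\<Union>(N' ` Z) = \<Union>(N ` Z) - {b}" unfolding N'_def by auto
            moreover have "card (\<Union>(N ` Z) - {b}) \<ge> card (\<Union>(N ` Z)) - 1"
              using fin by (metis card_Diff_singleton_if diff_le_self order_refl)
            ultimately show ?thesis by simp
          qed
        qed
      qed
      then obtain f where f: "inj_on f A'" "\<forall>x\<in>A'. f x \<in> N' x" by blast
      define g where "g = f(a := b)"
      have "inj_on g A"
      proof -
        have "A = insert a A'" using a A'_def by auto
        moreover have "inj_on g A'" using f(1) unfolding g_def A'_def
          by (simp add: inj_on_def)
        moreover have "g a \<notin> g ` A'" using f(2) unfolding g_def N'_def A'_def by auto
        moreover have "a \<notin> A'" using A'_def by auto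
        ultimately have "inj_on g (insert a A')" by simp
        thus ?thesis using a A'_def by (simp add: insert_absorb)
      qed
      moreover have "\<forall>x\<in>A. g x \<in> N x" using f(2) b unfolding g_def N'_def A'_def by auto
      ultimately show ?thesis by blast
    next
      case True
      then obtain Z where Z: "Z \<subseteq> A" "Z \<noteq> {}" "Z \<noteq> A" "card (\<Union>(N ` Z)) = card Z" by blast
      have finZ: "finite Z" using Z(1) less.prems(1) finite_subset by blast
      have cZ: "card Z < card A" using Z less.prems(1) by (meson psubsetI psubset_card_mono)
      have "\<exists>f. inj_on f Z \<and> (\<forall>x\<in>Z. f x \<in> N x)"
      proof (rule less.hyps[OF cZ finZ])
        show "\<forall>a\<in>Z. finite (N a)" using less.prems(2) Z(1) by auto
        show "\<forall>Za\<subseteq>Z. card Za \<le> card (\<Union>(N ` Za))" using less.prems(3) Z(1) by auto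
      qed
      then obtain f1 where f1: "inj_on f1 Z" "\<forall>x\<in>Z. f1 x \<in> N x" by blast
      define A2 where "A2 = A - Z"
      define U where "U = \<Union>(N ` Z)"
      define N2 where "N2 = (\<lambda>x. N x - U)"
      have finU: "finite U" unfolding U_def using Z(1) less.prems(2) finZ by auto
      have cA2: "card A2 < card A" unfolding A2_def using Z less.prems(1)
        by (metis Diff_subset card_seteq diff_card_le_card_Diff finite_Diff
            Diff_eq_empty_iff not_less double_diff order_refl)
      have "\<exists>f. inj_on f A2 \<and> (\<forall>x\<in>A2. f x \<in> N2 x)"
      proof (rule less.hyps[OF cA2])
        show "finite A2" using less.prems(1) A2_def by auto
        show "\<forall>x\<in>A2. finite (N2 x)" using less.prems(2) A2_def N2_def by auto
        show "\<forall>Y\<subseteq>A2. card Y \<le> card (\<Union>(N2 ` Y))"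
        proof (intro allI impI)
          fix Y assume Y: "Y \<subseteq> A2"
          have finY: "finite Y" using Y less.prems(1) A2_def finite_subset by blast
          have YZ: "Y \<union> Z \<subseteq> A" using Y Z A2_def by auto
          have disj: "Y \<inter> Z = {}" using Y A2_def by auto
          have h: "card (Y \<union> Z) \<le> card (\<Union>(N ` (Y \<union> Z)))" using less.prems(3) YZ by blast
          have finYZ: "finite (\<Union>(N ` (Y \<union> Z)))" using YZ less.prems(1,2)
            by (meson finite_UN_I finite_subset subsetD)
          have eq: "\<Union>(N2 ` Y) = \<Union>(N ` (Y \<union> Z)) - U" unfolding N2_def U_def by auto
          have sub: "U \<subseteq> \<Union>(N ` (Y \<union> Z))" unfolding U_def by auto
          have "card (\<Union>(N2 ` Y)) = card (\<Union>(N ` (Y \<union> Z))) - card U"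
            unfolding eq using card_Diff_subset[OF finU sub] by simp
          moreover have "card (Y \<union> Z) = card Y + card Z" using card_Un_disjoint[OF finY finZ disj] .
          moreover have "card U = card Z" using Z(4) U_def by simp
          ultimately show "card Y \<le> card (\<Union>(N2 ` Y))" using h by linarith
        qed
      qed
      then obtain f2 where f2: "inj_on f2 A2" "\<forall>x\<in>A2. f2 x \<in> N2 x" by blast
      define g where "g = (\<lambda>x. if x \<in> Z then f1 x else f2 x)"
      have "inj_on g A"
      proof (rule inj_onI)
        fix x y assume xy: "x \<in> A" "y \<in> A" "g x = g y"
        have u1: "\<And>x. x \<in> Z \<Longrightarrow> f1 x \<in> U" using f1(2) U_def by auto
        have u2: "\<And>x. x \<in> A2 \<Longrightarrow> f2 x \<notin> U" using f2(2) N2_def by auto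
        show "x = y"
        proof (cases "x \<in> Z"; cases "y \<in> Z")
          assume "x \<in> Z" "y \<in> Z" thus ?thesis using xy f1(1) g_def by (simp add: inj_on_def)
        next
          assume "x \<in> Z" "y \<notin> Z" thus ?thesis using xy u1 u2 A2_def g_def by force
        next
          assume "x \<notin> Z" "y \<in> Z" thus ?thesis using xy u1 u2 A2_def g_def by force
        next
          assume "x \<notin> Z" "y \<notin> Z" thus ?thesis using xy f2(1) g_def A2_def by (simp add: inj_on_def)
        qed
      qed
      moreover have "\<forall>x\<in>A. g x \<in> N x" using f1(2) f2(2) g_def A2_def N2_def by auto
      ultimately show ?thesis by blast
    qed
  qed
qed


lemma fin_copies:
  assumes "finite A"
  fixes f :: "'a \<Rightarrow> nat"
  shows "finite {(u, i). u \<in> A \<and> i < f u}"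
proof -
  have "{(u, i). u \<in> A \<and> i < f u} = Sigma A (\<lambda>u. {..<f u})" by auto
  moreover have "finite (Sigma A (\<lambda>u. {..<f u}))" using assms by (intro finite_SigmaI) auto
  ultimately show ?thesis by simp
qed

lemma final_arith:
  fixes A Q X g d a :: real
  assumes h1: "g * X \<le> A + Q" and h2: "g * Q < d * A" and h3: "X \<ge> A / a"
    and A: "A > 0" and h4: "g^2 \<ge> 2 * d * a" and h5: "g \<le> d" and a: "a \<ge> 1" and g: "g \<ge> 1"
  shows False
proof -
  have aX: "a * X \<ge> A" using h3 a by (simp add: divide_le_eq mult.commute)
  have "g * (g * X) \<le> g * A + g * Q" using mult_left_mono[OF h1, of g] g by (simp add: distrib_left)
  hence s1: "g^2 * X < (g + d) * A" using h2 by (simp add: power2_eq_square algebra_simps)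
  have s2: "g^2 * (a * X) < a * ((g + d) * A)" using mult_strict_left_mono[OF s1, of a] a by (simp add: algebra_simps)
  have s3: "g^2 * A \<le> g^2 * (a * X)" using aX by (simp add: mult_left_mono)
  have s4: "2 * d * a * A \<le> g^2 * A" using h4 A by (simp add: mult_right_mono)
  have s5: "a * ((g + d) * A) \<le> 2 * d * a * A" using h5 A a
  proof -
    have "(g + d) * A \<le> (2 * d) * A" using h5 A by (intro mult_right_mono) auto
    hence "a * ((g + d) * A) \<le> a * ((2 * d) * A)" using a by (intro mult_left_mono) auto
    thus ?thesis by (simp add: algebra_simps)
  qed
  show False using s2 s3 s4 s5 by linarith
qed

theorem mainTheorem7:
  fixes V :: "'a set" and E :: "'a \<Rightarrow> 'a \<Rightarrow> bool" and w :: "'a \<Rightarrow> nat"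
    and \<alpha> :: real and \<Delta> \<gamma> :: nat and Istar I :: "'a set"
    and M :: "(('a \<times> nat) \<times> ('a \<times> nat)) set"
  assumes "graph V E" and "V \<noteq> {}" and "\<forall>v\<in>V. w v > 0"
    and "\<Delta> = max_degree V E" and "\<Delta> \<ge> 1"
    and "1 \<le> \<alpha>" and "\<alpha> \<le> real \<Delta>"
    and "\<gamma> = nat \<lceil>sqrt (2 * real \<Delta> * \<alpha>)\<rceil>" and "\<gamma> \<le> \<Delta>"
    and "stable_instance V E (\<lambda>u. real (w u)) (real \<gamma>) Istar"
    and "indep V E I"
    and "wsum (\<lambda>u. real (w u)) I \<ge> wsum (\<lambda>u. real (w u)) Istar / \<alpha>"
    and "G0_max_matching V E w I \<gamma> M"
    and "I \<noteq> Istar"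
  shows "purify_out I \<gamma> w M \<noteq> {} \<and> purify_out I \<gamma> w M \<subseteq> Istar"
proof -
  let ?Is = Istar
  have finV: "finite V" and EV: "\<And>u v. E u v \<Longrightarrow> u \<in> V \<and> v \<in> V"
    and symE: "\<And>u v. E u v \<Longrightarrow> E v u" and irr: "\<And>u. \<not> E u u"
    using assms(1) unfolding graph_def by auto
  have umIs: "unique_mwis V E (\<lambda>u. real (w u)) Istar"
    using assms(10) unfolding stable_instance_def by blast
  have IsV: "Istar \<subseteq> V" and indIs: "\<And>a b. a \<in> Istar \<Longrightarrow> b \<in> Istar \<Longrightarrow> \<not> E a b"
    using umIs unfolding unique_mwis_def indep_def by auto
  have IV: "I \<subseteq> V" and indI: "\<And>a b. a \<in> I \<Longrightarrow> b \<in> I \<Longrightarrow> \<not> E a b"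
    using assms(11) unfolding indep_def by auto
  have finIs: "finite Istar" using IsV finV finite_subset by blast
  have finI: "finite I" using IV finV finite_subset by blast
  define Wr where "Wr X = (\<Sum>u\<in>X. real (w u))" for X
  have Wr_nat: "\<And>X. Wr X = real (\<Sum>u\<in>X. w u)" unfolding Wr_def by simp
  define s where "s = sqrt (2 * real \<Delta> * \<alpha>)"
  have s0: "s \<ge> 0" unfolding s_def using assms(5,6) by simp
  have gs: "real \<gamma> \<ge> s" unfolding assms(8) s_def[symmetric] proof -
    have "real (nat \<lceil>s\<rceil>) = of_int \<lceil>s\<rceil>" using s0 by simp
    thus "s \<le> real (nat \<lceil>s\<rceil>)" using le_of_int_ceiling[of s] by simp
  qed
  have g2: "real \<gamma> ^ 2 \<ge> 2 * real \<Delta> * \<alpha>"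
  proof -
    have "s ^ 2 = 2 * real \<Delta> * \<alpha>" unfolding s_def using assms(5,6) by simp
    moreover have "s ^ 2 \<le> real \<gamma> ^ 2" using gs s0 by (simp add: power_mono)
    ultimately show ?thesis by simp
  qed
  have g1: "real \<gamma> \<ge> 1"
  proof (rule ccontr)
    assume "\<not> real \<gamma> \<ge> 1"
    hence "\<gamma> = 0" by simp
    moreover have "2 * real \<Delta> * \<alpha> > 0" using assms(5,6) by simp
    ultimately show False using g2 by simp
  qed
  have stabJ: "\<And>J. indep V E J \<Longrightarrow> J \<noteq> Istar \<Longrightarrow> real \<gamma> * Wr (J - Istar) < Wr (Istar - J)"
    unfolding Wr_def using stab[OF assms(10) _ _ g1 finV] by blast
  have Mm: "G0_matching V E w I \<gamma> M" and Mmax: "\<And>M'. G0_matching V E w I \<gamma> M' \<Longrightarrow> card M' \<le> card M"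
    using assms(13) unfolding G0_max_matching_def by auto
  have Msub: "M \<subseteq> copiesL I \<gamma> w \<times> copiesR V I w" and Madj0: "\<forall>(x, y)\<in>M. E (fst x) (fst y)"
    and mc0: "\<forall>(x, y)\<in>M. \<forall>(x', y')\<in>M. x = x' \<longleftrightarrow> y = y'"
    using Mm unfolding G0_matching_def by auto
  have Madj: "\<And>x y. (x, y) \<in> M \<Longrightarrow> E (fst x) (fst y)"
  proof -
    fix x y assume p: "(x, y) \<in> M"
    show "E (fst x) (fst y)" using bspec[OF Madj0 p] by simp
  qed
  have mc: "\<And>x y x' y'. (x, y) \<in> M \<Longrightarrow> (x', y') \<in> M \<Longrightarrow> (x = x') = (y = y')"
  proof -
    fix x y x' y' assume p: "(x, y) \<in> M" and q: "(x', y') \<in> M"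
    have "\<forall>(x', y')\<in>M. x = x' \<longleftrightarrow> y = y'" using bspec[OF mc0 p] by simp
    from bspec[OF this q] show "(x = x') = (y = y')" by simp
  qed
  have finL: "finite (copiesL I \<gamma> w)" unfolding copiesL_def using fin_copies[OF finI, of "\<lambda>u. \<gamma> * w u"] by simp
  have finR: "finite (copiesR V I w)" unfolding copiesR_def using fin_copies[of "V - I" w] finV by simp
  have finM: "finite M" using Msub finite_cartesian_product[OF finL finR] finite_subset by blast
  have injfst: "inj_on fst M"
  proof (rule inj_onI)
    fix p q assume "p \<in> M" "q \<in> M" "fst p = fst q"
    thus "p = q" using mc[of "fst p" "snd p" "fst q" "snd q"] by (simp add: prod_eq_iff)
  qed
  have injsnd: "inj_on snd M"
  proof (rule inj_onI)
    fix p q assume "p \<in> M" "q \<in> M" "snd p = snd q"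
    thus "p = q" using mc[of "fst p" "snd p" "fst q" "snd q"] by (simp add: prod_eq_iff)
  qed
  have part2: "purify_out I \<gamma> w M \<subseteq> Istar"
  proof
    fix u assume u: "u \<in> purify_out I \<gamma> w M"
    then obtain i where ui: "u \<in> I" "i < \<gamma> * w u" "(u, i) \<notin> fst ` M"
      by (auto simp: purify_out_def)
    show "u \<in> Istar"
    proof (rule ccontr)
      assume uIs: "u \<notin> Istar"
      define B where "B = I - Istar"
      define L1 where "L1 = copiesL B \<gamma> w"
      define R1 where "R1 = {(v, j). v \<in> Istar - I \<and> j < w v}"
      define Nb where "Nb x = {y \<in> R1. E (fst x) (fst y)}" for x :: "'a \<times> nat"
      have finB: "finite B" using finI B_def by simp
      have finL1: "finite L1" unfolding L1_def copiesL_def using fin_copies[OF finB, of "\<lambda>u. \<gamma> * w u"] by simp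
      have finR1: "finite R1" unfolding R1_def using fin_copies[of "Istar - I" w] finIs by simp
      have uiL1: "(u, i) \<in> L1" using ui uIs unfolding L1_def copiesL_def B_def by auto
      have hallc: "\<forall>Z\<subseteq>L1. card Z \<le> card (\<Union>(Nb ` Z))"
      proof (intro allI impI)
        fix Z assume Z: "Z \<subseteq> L1"
        show "card Z \<le> card (\<Union>(Nb ` Z))"
        proof (cases "Z = {}")
          case True then show ?thesis by simp
        next
          case False
          define C where "C = fst ` Z"
          define NC where "NC = {v \<in> Istar. \<exists>c\<in>C. E c v}"
          have CB: "C \<subseteq> B" using Z unfolding L1_def copiesL_def C_def by auto
          have Cne: "C \<noteq> {}" using False C_def by auto
          define J where "J = (Istar - NC) \<union> C"
          have indJ: "indep V E J"
            unfolding indep_def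
          proof
            show "J \<subseteq> V" using IsV IV CB unfolding J_def B_def by auto
            have CI: "C \<subseteq> I" using CB B_def by auto
            show "\<forall>a\<in>J. \<forall>b\<in>J. \<not> E a b"
            proof (intro ballI notI)
              fix a b assume a: "a \<in> J" and b: "b \<in> J" and ab: "E a b"
              have ba: "E b a" using symE ab .
              show False
              proof (cases "a \<in> C")
                case aC: True
                show False
                proof (cases "b \<in> C")
                  case True thus False using aC CI indI ab by blast
                next
                  case False
                  hence "b \<in> Istar" "b \<notin> NC" using b J_def by auto
                  thus False using aC ab NC_def by auto
                qed
              next
                case False
                hence aI: "a \<in> Istar" "a \<notin> NC" using a J_def by auto
                show False
                proof (cases "b \<in> C")
                  case True thus False using aI ba NC_def by auto
                next
                  case False
                  hence "b \<in> Istar" using b J_def by auto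
                  thus False using aI indIs ab by blast
                qed
              qed
            qed
          qed
          have "J \<noteq> Istar" using Cne CB unfolding J_def B_def by auto
          hence lt: "real \<gamma> * Wr (J - Istar) < Wr (Istar - J)" using stabJ indJ by blast
          have JmI: "J - Istar = C" using CB unfolding J_def B_def by auto
          have IsmJ: "Istar - J = NC" using CB unfolding J_def B_def NC_def by auto
          have finNC: "finite NC" using finIs NC_def by simp
          have U: "\<Union>(Nb ` Z) = {(v, j). v \<in> NC \<and> j < w v}"
          proof
            show "\<Union>(Nb ` Z) \<subseteq> {(v, j). v \<in> NC \<and> j < w v}"
            proof
              fix y assume "y \<in> \<Union>(Nb ` Z)"
              then obtain x where x: "x \<in> Z" "y \<in> R1" "E (fst x) (fst y)" unfolding Nb_def by auto
              obtain v j where y: "y = (v, j)" by (cases y)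
              have yv: "v \<in> Istar" "j < w v" using x(2) y unfolding R1_def by auto
              have "fst x \<in> C" using x(1) C_def by auto
              hence "v \<in> NC" using yv x(3) y NC_def by auto
              thus "y \<in> {(v, j). v \<in> NC \<and> j < w v}" using y yv by auto
            qed
            show "{(v, j). v \<in> NC \<and> j < w v} \<subseteq> \<Union>(Nb ` Z)"
            proof clarify
              fix v j assume vj: "v \<in> NC" "j < w v"
              then obtain x where x: "x \<in> Z" "E (fst x) v" "v \<in> Istar" unfolding NC_def C_def by auto
              have "fst x \<in> I" using x(1) CB C_def B_def by auto
              hence "v \<notin> I" using indI x(2) by blast
              hence "(v, j) \<in> Nb x" unfolding Nb_def R1_def using x vj by auto
              thus "(v, j) \<in> \<Union>(Nb ` Z)" using x(1) by blast
            qed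
          qed
          have cU: "card (\<Union>(Nb ` Z)) = (\<Sum>v\<in>NC. w v)" unfolding U using card_copies[OF finNC, of w] .
          have finC: "finite C" using CB finB finite_subset by blast
          have Zsub: "Z \<subseteq> {(c, k). c \<in> C \<and> k < \<gamma> * w c}"
          proof
            fix z assume z: "z \<in> Z"
            obtain c k where zc: "z = (c, k)" by (cases z)
            have "k < \<gamma> * w c" using z Z zc unfolding L1_def copiesL_def by auto
            moreover have "c \<in> C" using z zc unfolding C_def by (metis fst_conv image_eqI)
            ultimately show "z \<in> {(c, k). c \<in> C \<and> k < \<gamma> * w c}" using zc by auto
          qed
          have "card Z \<le> card {(c, k). c \<in> C \<and> k < \<gamma> * w c}"
            using card_mono[OF fin_copies[OF finC, of "\<lambda>u. \<gamma> * w u"] Zsub] .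
          also have "\<dots> = (\<Sum>c\<in>C. \<gamma> * w c)" using card_copies[OF finC, of "\<lambda>u. \<gamma> * w u"] .
          finally have cZ: "card Z \<le> (\<Sum>c\<in>C. \<gamma> * w c)" .
          have eqC: "real (\<Sum>c\<in>C. \<gamma> * w c) = real \<gamma> * Wr C"
            unfolding Wr_def by (simp add: sum_distrib_left)
          have "real (card Z) \<le> real (\<Sum>c\<in>C. \<gamma> * w c)" using cZ by (simp only: of_nat_le_iff)
          hence r1: "real (card Z) \<le> real \<gamma> * Wr C" using eqC by simp
          have r2: "real \<gamma> * Wr C < Wr NC" using lt JmI IsmJ by simp
          have r3: "Wr NC = real (\<Sum>v\<in>NC. w v)" by (rule Wr_nat)
          have "real (card Z) < real (\<Sum>v\<in>NC. w v)" using r1 r2 r3 by linarith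
          hence "card Z < (\<Sum>v\<in>NC. w v)" by (simp only: of_nat_less_iff)
          thus ?thesis using cU by simp
        qed
      qed
      have finNb: "\<forall>x\<in>L1. finite (Nb x)" using finR1 unfolding Nb_def by simp
      obtain f where f: "inj_on f L1" "\<forall>x\<in>L1. f x \<in> Nb x" using hall[OF finL1 finNb hallc] by blast
      define Mr where "Mr = {p \<in> M. fst (fst p) \<notin> B}"
      define Mb where "Mb = {p \<in> M. fst (fst p) \<in> B}"
      define F where "F = (\<lambda>x. (x, f x)) ` L1"
      define M' where "M' = Mr \<union> F"
      have L1I: "L1 \<subseteq> copiesL I \<gamma> w" unfolding L1_def copiesL_def B_def by auto
      have fR: "\<And>x. x \<in> L1 \<Longrightarrow> f x \<in> R1 \<and> E (fst x) (fst (f x))" using f(2) Nb_def by auto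
      have R1R: "R1 \<subseteq> copiesR V I w" unfolding R1_def copiesR_def using IsV by auto
      have R1Is: "\<And>y. y \<in> R1 \<Longrightarrow> fst y \<in> Istar" unfolding R1_def by auto
      have L1B: "\<And>x. x \<in> L1 \<Longrightarrow> fst x \<in> B" unfolding L1_def copiesL_def by auto
      have MrIs: "\<And>x y. (x, y) \<in> Mr \<Longrightarrow> fst x \<in> Istar \<and> fst y \<notin> Istar \<and> fst x \<notin> B"
      proof -
        fix x y assume p: "(x, y) \<in> Mr"
        hence "(x, y) \<in> M" "fst x \<notin> B" using Mr_def by auto
        hence "fst x \<in> I" "fst x \<notin> B" "E (fst x) (fst y)" using Msub Madj unfolding copiesL_def by auto
        thus "fst x \<in> Istar \<and> fst y \<notin> Istar \<and> fst x \<notin> B" using indIs B_def by auto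
      qed
      have M'm: "G0_matching V E w I \<gamma> M'"
        unfolding G0_matching_def
      proof (intro conjI)
        show "M' \<subseteq> copiesL I \<gamma> w \<times> copiesR V I w"
          using Msub L1I R1R fR unfolding M'_def Mr_def F_def by auto
        show "\<forall>(x, y)\<in>M'. E (fst x) (fst y)"
          using Madj fR unfolding M'_def Mr_def F_def by auto
        have key: "\<And>x y x' y'. (x, y) \<in> M' \<Longrightarrow> (x', y') \<in> M' \<Longrightarrow> (x = x') = (y = y')"
        proof -
          fix x y x' y' assume p: "(x, y) \<in> M'" and q: "(x', y') \<in> M'"
          show "(x = x') = (y = y')"
          proof (cases "(x, y) \<in> Mr"; cases "(x', y') \<in> Mr")
            assume "(x, y) \<in> Mr" "(x', y') \<in> Mr"
            thus ?thesis using mc Mr_def by auto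
          next
            assume a1: "(x, y) \<in> Mr" "(x', y') \<notin> Mr"
            hence "(x', y') \<in> F" using q M'_def by auto
            hence "x' \<in> L1" "y' = f x'" using F_def by auto
            moreover have "x \<noteq> x'" using a1(1) MrIs L1B \<open>x' \<in> L1\<close> by blast
            moreover have "y \<noteq> y'" using a1(1) MrIs fR R1Is \<open>x' \<in> L1\<close> \<open>y' = f x'\<close> by metis
            ultimately show ?thesis by simp
          next
            assume a1: "(x, y) \<notin> Mr" "(x', y') \<in> Mr"
            hence "(x, y) \<in> F" using p M'_def by auto
            hence "x \<in> L1" "y = f x" using F_def by auto
            moreover have "x \<noteq> x'" using a1(2) MrIs L1B \<open>x \<in> L1\<close> by blast
            moreover have "y \<noteq> y'" using a1(2) MrIs fR R1Is \<open>x \<in> L1\<close> \<open>y = f x\<close> by metis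
            ultimately show ?thesis by simp
          next
            assume a1: "(x, y) \<notin> Mr" "(x', y') \<notin> Mr"
            hence "(x, y) \<in> F" "(x', y') \<in> F" using p q M'_def by auto
            hence "x \<in> L1" "y = f x" "x' \<in> L1" "y' = f x'" using F_def by auto
            thus ?thesis using f(1) by (auto simp: inj_on_def)
          qed
        qed
        show "\<forall>(x, y)\<in>M'. \<forall>(x', y')\<in>M'. (x = x') = (y = y')"
          using key by blast
      qed
      have finMr: "finite Mr" using finM Mr_def by simp
      have finF: "finite F" using finL1 F_def by simp
      have disj: "Mr \<inter> F = {}" using MrIs L1B unfolding F_def by fastforce
      have cF: "card F = card L1" unfolding F_def by (rule card_image) (auto simp: inj_on_def)
      have cM': "card M' = card Mr + card L1" unfolding M'_def using card_Un_disjoint[OF finMr finF disj] cF by simp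
      have "M = Mr \<union> Mb" "Mr \<inter> Mb = {}" unfolding Mr_def Mb_def by auto
      hence cM: "card M = card Mr + card Mb" using finM card_Un_disjoint[of Mr Mb]
        by (metis finite_Un)
      have "card Mb = card (fst ` Mb)" using injfst Mb_def by (metis (no_types, lifting) card_image inj_on_subset mem_Collect_eq subsetI)
      also have "fst ` Mb \<subseteq> L1 - {(u, i)}"
      proof
        fix x assume "x \<in> fst ` Mb"
        then obtain p where p: "p \<in> M" "fst (fst p) \<in> B" "x = fst p" using Mb_def by auto
        have "fst p \<in> copiesL I \<gamma> w" using p Msub by auto
        hence "x \<in> L1" using p unfolding L1_def copiesL_def by auto
        moreover have "x \<noteq> (u, i)" using p ui(3) by (metis image_eqI)
        ultimately show "x \<in> L1 - {(u, i)}" by simp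
      qed
      hence "card (fst ` Mb) \<le> card (L1 - {(u, i)})" using finL1 by (simp add: card_mono)
      also have "\<dots> < card L1" using card_Diff1_less[OF finL1 uiL1] .
      finally have "card Mb < card L1" .
      hence "card M < card M'" using cM cM' by simp
      thus False using Mmax[OF M'm] by simp
    qed
  qed
  have part1: "purify_out I \<gamma> w M \<noteq> {}"
  proof
    assume empty: "purify_out I \<gamma> w M = {}"
    have Lsub: "copiesL I \<gamma> w \<subseteq> fst ` M"
    proof
      fix x assume x: "x \<in> copiesL I \<gamma> w"
      show "x \<in> fst ` M"
      proof (rule ccontr)
        assume "x \<notin> fst ` M"
        hence "fst x \<in> purify_out I \<gamma> w M" using x unfolding purify_out_def copiesL_def by force
        thus False using empty by simp
      qed
    qed
    have "card (copiesL I \<gamma> w) \<le> card (fst ` M)" using card_mono[OF _ Lsub] finM by simp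
    also have "\<dots> \<le> card M" using card_image_le finM by blast
    also have "\<dots> = card (snd ` M)" using card_image[OF injsnd] by simp
    also have "\<dots> \<le> card (copiesR V I w)" using Msub finR by (intro card_mono) auto
    finally have cc: "card (copiesL I \<gamma> w) \<le> card (copiesR V I w)" .
    have cL: "card (copiesL I \<gamma> w) = (\<Sum>u\<in>I. \<gamma> * w u)" unfolding copiesL_def using card_copies[OF finI, of "\<lambda>u. \<gamma> * w u"] by simp
    have cR: "card (copiesR V I w) = (\<Sum>u\<in>V - I. w u)" unfolding copiesR_def using card_copies[of "V - I" w] finV by simp
    have "real (\<Sum>u\<in>I. \<gamma> * w u) = real \<gamma> * Wr I" unfolding Wr_def by (simp add: sum_distrib_left)
    hence h1a: "real \<gamma> * Wr I \<le> Wr (V - I)" using cc cL cR Wr_nat[of "V - I"] by (metis of_nat_le_iff)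
    have "Wr (V - I) \<le> Wr V" unfolding Wr_def using finV by (intro sum_mono2) auto
    also have "Wr V = Wr Istar + Wr (V - Istar)" unfolding Wr_def using finV IsV
      by (metis sum.subset_diff add.commute)
    finally have h1: "real \<gamma> * Wr I \<le> Wr Istar + Wr (V - Istar)" using h1a by linarith
    obtain v0 where v0: "v0 \<in> V" using assms(2) by blast
    have Apos: "Wr Istar > 0"
    proof (cases "{v0} = Istar")
      case True thus ?thesis using v0 assms(3) Wr_def by auto
    next
      case False
      have "indep V E {v0}" unfolding indep_def using v0 irr by auto
      hence "wsum (\<lambda>u. real (w u)) {v0} < wsum (\<lambda>u. real (w u)) Istar"
        using umIs False unfolding unique_mwis_def by blast
      thus ?thesis using v0 assms(3) unfolding wsum_def Wr_def by simp
    qed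
    have pv: "\<And>v. v \<in> V - Istar \<Longrightarrow> real \<gamma> * real (w v) < Wr {u \<in> Istar. E v u}"
    proof -
      fix v assume v: "v \<in> V - Istar"
      define J where "J = insert v (Istar - {u. E v u})"
      have indJ: "indep V E J" unfolding indep_def J_def using v IsV indIs irr symE by blast
      have "J \<noteq> Istar" using v J_def by auto
      hence "real \<gamma> * Wr (J - Istar) < Wr (Istar - J)" using stabJ indJ by blast
      moreover have "J - Istar = {v}" using v J_def by auto
      moreover have "Istar - J = {u \<in> Istar. E v u}" using v J_def by auto
      ultimately show "real \<gamma> * real (w v) < Wr {u \<in> Istar. E v u}" unfolding Wr_def by simp
    qed
    have deg: "\<And>u. u \<in> Istar \<Longrightarrow> card {v \<in> V - Istar. E v u} \<le> \<Delta>"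
    proof -
      fix u assume u: "u \<in> Istar"
      have "card {v \<in> V - Istar. E v u} \<le> card {v \<in> V. E u v}"
        using finV symE by (intro card_mono) auto
      also have "\<dots> = degree V E u" unfolding degree_def by simp
      also have "\<dots> \<le> \<Delta>" unfolding assms(4) max_degree_def using finV u IsV by (intro Max_ge) auto
      finally show "card {v \<in> V - Istar. E v u} \<le> \<Delta>" .
    qed
    have dc: "(\<Sum>v\<in>V - Istar. Wr {u \<in> Istar. E v u}) \<le> real \<Delta> * Wr Istar"
    proof -
      have "(\<Sum>v\<in>V - Istar. Wr {u \<in> Istar. E v u})
          = (\<Sum>v\<in>V - Istar. \<Sum>u\<in>Istar. if E v u then real (w u) else 0)"
        unfolding Wr_def using finIs by (simp add: sum.inter_filter)
      also have "\<dots> = (\<Sum>u\<in>Istar. \<Sum>v\<in>V - Istar. if E v u then real (w u) else 0)"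
        by (rule sum.swap)
      also have "\<dots> = (\<Sum>u\<in>Istar. real (card {v \<in> V - Istar. E v u}) * real (w u))"
      proof (rule sum.cong[OF refl])
        fix u
        have "(\<Sum>v\<in>{v \<in> V - Istar. E v u}. real (w u)) = (\<Sum>v\<in>V - Istar. if E v u then real (w u) else 0)"
          using finV by (intro sum.inter_filter) auto
        hence "(\<Sum>v\<in>V - Istar. if E v u then real (w u) else 0) = (\<Sum>v\<in>{v \<in> V - Istar. E v u}. real (w u))" by simp
        thus "(\<Sum>v\<in>V - Istar. if E v u then real (w u) else 0) = real (card {v \<in> V - Istar. E v u}) * real (w u)"
          by simp
      qed
      also have "\<dots> \<le> (\<Sum>u\<in>Istar. real \<Delta> * real (w u))"
        using deg by (intro sum_mono mult_right_mono) auto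
      also have "\<dots> = real \<Delta> * Wr Istar" unfolding Wr_def by (simp add: sum_distrib_left)
      finally show ?thesis .
    qed
    have h2: "real \<gamma> * Wr (V - Istar) < real \<Delta> * Wr Istar"
    proof (cases "V - Istar = {}")
      case True
      hence "Wr (V - Istar) = 0" unfolding Wr_def by (simp only: sum.empty)
      moreover have "real \<Delta> * Wr Istar > 0" using Apos assms(5) by simp
      ultimately show ?thesis by simp
    next
      case False
      have "real \<gamma> * Wr (V - Istar) = (\<Sum>v\<in>V - Istar. real \<gamma> * real (w v))"
        unfolding Wr_def by (simp add: sum_distrib_left)
      also have "\<dots> < (\<Sum>v\<in>V - Istar. Wr {u \<in> Istar. E v u})"
        using finV False pv by (intro sum_strict_mono) auto
      finally show ?thesis using dc by linarith
    qed
    have h3: "Wr I \<ge> Wr Istar / \<alpha>" using assms(12) unfolding wsum_def Wr_def .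
    show False
      using final_arith[OF h1 h2 h3 Apos g2 _ assms(6) g1] assms(9) by simp
  qed
  show ?thesis using part1 part2 by blast
qed

end
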